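(* Let $k\geq 1$ be an integer. Then (a) there exist $v$ and a connected symmetric configuration $v_3$ whose minimum blocking set cardinality is exactly $\lceil v/3\rceil+k$; and (b) there exist $v$ and a connected symmetric configuration $v_3$ whose minimum blocking set cardinality is exactly $\lfloor v/2\rfloor-k$.
   Context: A symmetric configuration $v_3$ consists of a set of $v$ points and a collection of $v$ blocks, each block being a 3-element subset of the points, such that every point lies in exactly 3 blocks and any two distinct points lie in at most one common block; it is connected if it is not the union of two configurations on disjoint nonempty point sets. A blocking set is a subset $Q$ of the points such that every block contains at least one point of $Q$ and at least one point not in $Q$; the minimum blocking set cardinality is the smallest cardinality of a blocking set. *)

theory Defs
  imports Complex_Main
begin

text \<open>Blocks are 3-element subsets of P; since two distinct points lie in at most one
  block, distinct blocks are distinct sets, so B is a set of sets.\<close>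
definition sym_config :: "'a set \<Rightarrow> 'a set set \<Rightarrow> bool" where
  "sym_config P B \<longleftrightarrow>
     finite P \<and> card B = card P \<and>
     (\<forall>b\<in>B. b \<subseteq> P \<and> card b = 3) \<and>
     (\<forall>p\<in>P. card {b\<in>B. p \<in> b} = 3) \<and>
     (\<forall>p\<in>P. \<forall>q\<in>P. p \<noteq> q \<longrightarrow> card {b\<in>B. p \<in> b \<and> q \<in> b} \<le> 1)"

definition connected_config :: "'a set \<Rightarrow> 'a set set \<Rightarrow> bool" where
  "connected_config P B \<longleftrightarrow>
     sym_config P B \<and>
     \<not> (\<exists>P1 B1 P2 B2. sym_config P1 B1 \<and> sym_config P2 B2 \<and>
          P1 \<noteq> {} \<and> P2 \<noteq> {} \<and> P1 \<inter> P2 = {} \<and>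
          P = P1 \<union> P2 \<and> B = B1 \<union> B2)"

definition blocking_set :: "'a set \<Rightarrow> 'a set set \<Rightarrow> 'a set \<Rightarrow> bool" where
  "blocking_set P B Q \<longleftrightarrow> Q \<subseteq> P \<and>
     (\<forall>b\<in>B. b \<inter> Q \<noteq> {} \<and> b - Q \<noteq> {})"

definition min_blocking_card :: "'a set \<Rightarrow> 'a set set \<Rightarrow> nat \<Rightarrow> bool" where
  "min_blocking_card P B m \<longleftrightarrow>
     (\<exists>Q. blocking_set P B Q \<and> card Q = m) \<and>
     (\<forall>Q. blocking_set P B Q \<longrightarrow> m \<le> card Q)"

end

theory Submission imports Defs begin

definition fano :: "nat \<Rightarrow> nat set" where
  "fano t = (if t = 0 then {0,1,3} else if t = 1 then {1,2,4} else if t = 2 then {2,3,5}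
     else if t = 3 then {3,4,6} else if t = 4 then {4,5,0} else if t = 5 then {5,6,1} else {6,0,2})"

definition blk :: "nat \<Rightarrow> nat \<Rightarrow> nat \<Rightarrow> nat set" where
  "blk m j t = (if t < 6 then (\<lambda>s. 7*j+s) ` fano t
     else {7*j, 7*((j+1) mod m)+2, 7*((j+2) mod m)+6})"

definition inc :: "nat \<Rightarrow> nat \<Rightarrow> nat \<Rightarrow> nat \<Rightarrow> nat \<Rightarrow> bool" where
  "inc m a r j t = (if t < 6 then a = j \<and> r \<in> fano t
     else (a = j \<and> r = 0) \<or> (a = (j+1) mod m \<and> r = 2) \<or> (a = (j+2) mod m \<and> r = 6))"

lemma lt7: "t < (7::nat) \<Longrightarrow> t = 0 \<or> t = 1 \<or> t = 2 \<or> t = 3 \<or> t = 4 \<or> t = 5 \<or> t = 6" by auto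
lemma lt6: "t < (6::nat) \<Longrightarrow> t = 0 \<or> t = 1 \<or> t = 2 \<or> t = 3 \<or> t = 4 \<or> t = 5" by auto

lemma eq7: "r < 7 \<Longrightarrow> s < (7::nat) \<Longrightarrow> (7*a+r = 7*b+s) = (a = b \<and> r = s)"
  by presburger

lemma fano_lt: "s \<in> fano t \<Longrightarrow> s < 7" unfolding fano_def by (auto split: if_splits)

lemma fano_int: assumes "t < 7" "t' < 7" "t \<noteq> t'" shows "\<exists>x. fano t \<inter> fano t' = {x}"
  using lt7[OF assms(1)] lt7[OF assms(2)] assms(3)
  by (elim disjE) (simp_all add: fano_def)

lemma fano_int_port: assumes "t < 6" shows "\<exists>x. fano t \<inter> {0,2,6} = {x}"
  using lt6[OF assms(1)] by (elim disjE) (simp_all add: fano_def)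

lemma fano_card: assumes "t < 6" shows "card (fano t) = 3"
  using lt6[OF assms] by (elim disjE) (simp_all add: fano_def)

lemma fano_two: assumes "r \<noteq> r'" "t < 7" "t' < 7" "r \<in> fano t" "r' \<in> fano t"
   "r \<in> fano t'" "r' \<in> fano t'" shows "t = t'"
proof (rule ccontr)
  assume "t \<noteq> t'"
  then obtain x where "fano t \<inter> fano t' = {x}" using fano_int assms by blast
  with assms show False by (metis IntI singletonD)
qed

lemma fano_port: assumes "t < 6" "r \<noteq> r'" "r \<in> {0,2,6}" "r' \<in> {0,2,6}" "r \<in> fano t" "r' \<in> fano t" shows False
proof -
  obtain x where "fano t \<inter> {0,2,6} = {x}" using fano_int_port assms(1) by blast
  with assms(2-) show False by (metis IntI singletonD)
qed

lemma modc: "j < m \<Longrightarrow> c \<le> m \<Longrightarrow> (j+c) mod (m::nat) = (if j+c<m then j+c else j+c-m)"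
  by (simp add: mod_if)

lemma mod_cancel: "j < m \<Longrightarrow> j' < (m::nat) \<Longrightarrow> c \<le> m \<Longrightarrow> (j+c) mod m = (j'+c) mod m \<Longrightarrow> j = j'"
  using modc[of j m c] modc[of j' m c] by (auto split: if_splits)

lemma mem_blk: assumes r: "r < 7" shows "(7*a+r \<in> blk m j t) = inc m a r j t"
proof (cases "t < 6")
  case True
  have "(7*a+r \<in> (\<lambda>s. 7*j+s) ` fano t) = (a = j \<and> r \<in> fano t)"
  proof
    assume "7*a+r \<in> (\<lambda>s. 7*j+s) ` fano t"
    then obtain s where s: "s \<in> fano t" "7*a+r = 7*j+s" by auto
    with fano_lt[OF s(1)] eq7[OF r] show "a = j \<and> r \<in> fano t" by auto
  qed auto
  with True show ?thesis unfolding blk_def inc_def by simp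
next
  case False
  have a: "(7*a+r = 7*j) = (a = j \<and> r = 0)" using eq7[OF r, of 0 a j] by simp
  have b: "\<And>x. (7*a+r = 7*x+2) = (a = x \<and> r = 2)" using eq7[OF r, of 2 a] by simp
  have c: "\<And>x. (7*a+r = 7*x+6) = (a = x \<and> r = 6)" using eq7[OF r, of 6 a] by simp
  from False show ?thesis unfolding blk_def inc_def using a b c by auto
qed

lemma F3pair:
  assumes m: "m \<ge> 2" and j: "j < m" "j' < m" and t: "t < 7" "t' < 7"
    and ne: "(a,r) \<noteq> (a',r')"
    and i1: "inc m a r j t" and i2: "inc m a' r' j t"
    and i3: "inc m a r j' t'" and i4: "inc m a' r' j' t'"
  shows "j = j' \<and> t = t'"
proof (cases "t < 6")
  case T: True
  show ?thesis
  proof (cases "t' < 6")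
    case True
    with T i1 i2 i3 i4 have "a = j" "a' = j" "a = j'" "a' = j'" "r \<in> fano t" "r' \<in> fano t"
      "r \<in> fano t'" "r' \<in> fano t'" unfolding inc_def by auto
    with ne fano_two[of r r' t t'] t show ?thesis by auto
  next
    case False
    with T i1 i2 i3 i4 have "a = a'" "r \<in> fano t" "r' \<in> fano t" "r \<in> {0,2,6}" "r' \<in> {0,2,6}"
      unfolding inc_def by auto
    with ne fano_port[OF T, of r r'] show ?thesis by auto
  qed
next
  case F: False
  show ?thesis
  proof (cases "t' < 6")
    case True
    with F i1 i2 i3 i4 have "a = a'" "r \<in> fano t'" "r' \<in> fano t'" "r \<in> {0,2,6}" "r' \<in> {0,2,6}"
      unfolding inc_def by auto
    with ne fano_port[OF True, of r r'] show ?thesis by auto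
  next
    case False
    with F t have tt: "t = 6" "t' = 6" by auto
    from F False i1 i3 have
      "(a = j \<and> r = 0) \<or> (a = (j+1) mod m \<and> r = 2) \<or> (a = (j+2) mod m \<and> r = 6)"
      "(a = j' \<and> r = 0) \<or> (a = (j'+1) mod m \<and> r = 2) \<or> (a = (j'+2) mod m \<and> r = 6)"
      unfolding inc_def by auto
    with mod_cancel[OF j, of 1] mod_cancel[OF j, of 2] m have "j = j'" by auto
    with tt show ?thesis by simp
  qed
qed

lemma Tset: "r < 7 \<Longrightarrow> card {t. t < 6 \<and> r \<in> fano t} + (if r \<in> {0,2,6} then 1 else 0) = 3"
proof -
  assume "r < 7"
  then consider "r = 0" | "r = 1" | "r = 2" | "r = 3" | "r = 4" | "r = 5" | "r = 6" using lt7 by blast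
  then show ?thesis
  proof cases
    case 1 then have "{t. t < 6 \<and> r \<in> fano t} = {0,4}" by (auto simp: fano_def split: if_splits)
    with 1 show ?thesis by simp
  next
    case 2 then have "{t. t < 6 \<and> r \<in> fano t} = {0,1,5}" by (auto simp: fano_def split: if_splits)
    with 2 show ?thesis by simp
  next
    case 3 then have "{t. t < 6 \<and> r \<in> fano t} = {1,2}" by (auto simp: fano_def split: if_splits)
    with 3 show ?thesis by simp
  next
    case 4 then have "{t. t < 6 \<and> r \<in> fano t} = {0,2,3}" by (auto simp: fano_def split: if_splits)
    with 4 show ?thesis by simp
  next
    case 5 then have "{t. t < 6 \<and> r \<in> fano t} = {1,3,4}" by (auto simp: fano_def split: if_splits)
    with 5 show ?thesis by simp
  next
    case 6 then have "{t. t < 6 \<and> r \<in> fano t} = {2,4,5}" by (auto simp: fano_def split: if_splits)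
    with 6 show ?thesis by simp
  next
    case 7 then have "{t. t < 6 \<and> r \<in> fano t} = {3,5}" by (auto simp: fano_def split: if_splits)
    with 7 show ?thesis by simp
  qed
qed

lemma Jcard: fixes a m c :: nat assumes "a < m" "0 < c" "c \<le> m" shows "card {j. j < m \<and> a = (j+c) mod m} = 1"
proof -
  define j0 where "j0 = (a + m - c) mod m"
  have m0: "0 < m" using assms by simp
  have j0: "j0 < m" unfolding j0_def using m0 by simp
  have "(j0 + c) mod m = (a + m - c + c) mod m" unfolding j0_def by (rule mod_add_left_eq)
  also have "a + m - c + c = a + m" using assms by simp
  also have "(a + m) mod m = a" using assms by simp
  finally have e: "a = (j0 + c) mod m" by simp
  have "{j. j < m \<and> a = (j+c) mod m} = {j0}"
  proof (rule set_eqI, rule iffI)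
    fix j assume "j \<in> {j. j < m \<and> a = (j+c) mod m}"
    then have "j < m" "(j+c) mod m = (j0+c) mod m" using e by auto
    with mod_cancel[of j m j0 c] j0 assms(3) show "j \<in> {j0}" by simp
  next
    fix j assume "j \<in> {j0}" then show "j \<in> {j. j < m \<and> a = (j+c) mod m}" using j0 e by simp
  qed
  then show ?thesis by simp
qed

definition PS :: "nat \<Rightarrow> nat \<Rightarrow> nat \<Rightarrow> (nat \<times> nat) set" where
  "PS m a r = {(j,t). j < m \<and> t < 7 \<and> inc m a r j t}"

lemma PS_card: assumes m: "m \<ge> 2" and a: "a < m" and r: "r < 7" shows "card (PS m a r) = 3"
proof -
  let ?T = "{t. t < 6 \<and> r \<in> fano t}"
  let ?J = "{j. j < m \<and> ((a = j \<and> r = 0) \<or> (a = (j+1) mod m \<and> r = 2) \<or> (a = (j+2) mod m \<and> r = 6))}"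
  have eq: "PS m a r = (\<lambda>t. (a,t)) ` ?T \<union> (\<lambda>j. (j,6)) ` ?J"
  proof (rule set_eqI, clarify)
    fix j t
    show "((j,t) \<in> PS m a r) = ((j,t) \<in> (\<lambda>t. (a,t)) ` ?T \<union> (\<lambda>j. (j,6)) ` ?J)"
      using a by (cases "t < 6") (auto simp: PS_def inc_def)
  qed
  have fT: "finite ?T" by (rule finite_subset[of _ "{..<6}"]) auto
  have fJ: "finite ?J" by (rule finite_subset[of _ "{..<m}"]) auto
  have c1: "card ((\<lambda>t. (a,t)) ` ?T) = card ?T" by (rule card_image) (auto simp: inj_on_def)
  have c2: "card ((\<lambda>j. (j,6::nat)) ` ?J) = card ?J" by (rule card_image) (auto simp: inj_on_def)
  have d: "(\<lambda>t. (a,t)) ` ?T \<inter> (\<lambda>j. (j,6)) ` ?J = {}" by auto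
  have cJ: "card ?J = (if r \<in> {0,2,6} then 1 else 0)"
  proof -
    have "r = 0 \<or> r = 2 \<or> r = 6 \<or> r \<notin> {0,2,6}" by auto
    then show ?thesis
    proof (elim disjE)
      assume "r = 0" then have "?J = {a}" using a by auto
      then show ?thesis using \<open>r = 0\<close> by simp
    next
      assume "r = 2" then have "?J = {j. j < m \<and> a = (j+1) mod m}" by auto
      then show ?thesis using \<open>r = 2\<close> Jcard[OF a, of 1] m by simp
    next
      assume "r = 6" then have "?J = {j. j < m \<and> a = (j+2) mod m}" by auto
      then show ?thesis using \<open>r = 6\<close> Jcard[OF a, of 2] m by simp
    next
      assume "r \<notin> {0,2,6}" then have "?J = {}" by auto
      then show ?thesis using \<open>r \<notin> {0,2,6}\<close> by simp
    qed
  qed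
  have "card (PS m a r) = card ?T + card ?J"
    unfolding eq by (subst card_Un_disjoint) (use fT fJ d c1 c2 in auto)
  with cJ Tset[OF r] show ?thesis by linarith
qed


definition blkf :: "nat \<Rightarrow> nat \<times> nat \<Rightarrow> nat set" where
  "blkf m x = blk m (fst x) (snd x)"
definition PP :: "nat \<Rightarrow> nat set" where "PP m = {..<7*m}"
definition II :: "nat \<Rightarrow> (nat \<times> nat) set" where "II m = {..<m} \<times> {..<7}"
definition BB :: "nat \<Rightarrow> nat set set" where "BB m = blkf m ` II m"

lemma pdec: "p = 7 * (p div 7) + p mod (7::nat)" by simp
lemma pdiv: "p < 7*m \<Longrightarrow> p div 7 < (m::nat)" by simp

lemma mem_blk': "(p \<in> blk m j t) = inc m (p div 7) (p mod 7) j t"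
  using mem_blk[of "p mod 7" "p div 7" m j t] by simp

lemma blk_sub: assumes "j < m" "t < 7" shows "blk m j t \<subseteq> PP m"
proof
  fix p assume p: "p \<in> blk m j t"
  have m0: "0 < m" using assms by simp
  show "p \<in> PP m"
  proof (cases "t < 6")
    case True
    with p obtain s where "s \<in> fano t" "p = 7*j+s" unfolding blk_def by auto
    with fano_lt[of s t] assms show ?thesis unfolding PP_def by auto
  next
    case False
    have "(j+1) mod m < m" "(j+2) mod m < m" using m0 by auto
    then have "7*((j+1) mod m)+2 < 7*m" "7*((j+2) mod m)+6 < 7*m" "7*j < 7*m" using assms by linarith+
    with False p show ?thesis unfolding PP_def blk_def by auto
  qed
qed

lemma blk_card: assumes "t < 7" shows "card (blk m j t) = 3"
proof (cases "t < 6")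
  case True
  have "card ((\<lambda>s. 7*j+s) ` fano t) = card (fano t)" by (rule card_image) (auto simp: inj_on_def)
  with True fano_card show ?thesis unfolding blk_def by simp
next
  case False
  have a: "\<And>x. 7*j \<noteq> 7*x+(2::nat)" by presburger
  have b: "\<And>x. 7*j \<noteq> 7*x+(6::nat)" by presburger
  have c: "\<And>x y. 7*x+2 \<noteq> 7*y+(6::nat)" by presburger
  from False a b c show ?thesis unfolding blk_def by simp
qed

lemma idxset: "{x \<in> II m. p \<in> blkf m x} = PS m (p div 7) (p mod 7)"
  unfolding II_def PS_def blkf_def using mem_blk' by auto

lemma F3idx: assumes m: "m \<ge> 2" and pq: "p \<noteq> q" and x: "x \<in> II m" and y: "y \<in> II m"
  and h: "p \<in> blkf m x" "q \<in> blkf m x" "p \<in> blkf m y" "q \<in> blkf m y"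
  shows "x = y"
proof -
  obtain j t where xx: "x = (j,t)" by (cases x)
  obtain j' t' where yy: "y = (j',t')" by (cases y)
  have ne: "(p div 7, p mod 7) \<noteq> (q div 7, q mod 7)" using pq by (metis div_mult_mod_eq prod.inject)
  from x y xx yy have "j < m" "j' < m" "t < 7" "t' < 7" unfolding II_def by auto
  from F3pair[OF m this ne] h xx yy show ?thesis unfolding blkf_def using mem_blk' by auto
qed

lemma blkf_inj: assumes m: "m \<ge> 2" shows "inj_on (blkf m) (II m)"
proof (rule inj_onI)
  fix x y assume x: "x \<in> II m" and y: "y \<in> II m" and e: "blkf m x = blkf m y"
  have "snd x < 7" using x unfolding II_def by auto
  then have "card (blkf m x) = 3" unfolding blkf_def by (rule blk_card)
  then obtain p q r where "blkf m x = {p,q,r}" "p \<noteq> q" by (auto simp: card_3_iff)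
  with F3idx[OF m \<open>p \<noteq> q\<close> x y] e show "x = y" by auto
qed

lemma finII: "finite (II m)" unfolding II_def by simp

lemma symc: assumes m: "m \<ge> 2" shows "sym_config (PP m) (BB m)"
  unfolding sym_config_def
proof (intro conjI ballI impI)
  show "finite (PP m)" unfolding PP_def by simp
  have "card (BB m) = card (II m)" unfolding BB_def by (rule card_image[OF blkf_inj[OF m]])
  then show "card (BB m) = card (PP m)" unfolding II_def PP_def by (simp add: card_cartesian_product)
next
  fix b assume "b \<in> BB m"
  then obtain x where x: "x \<in> II m" "b = blkf m x" unfolding BB_def by auto
  then show "b \<subseteq> PP m" unfolding blkf_def II_def using blk_sub by (cases x) auto
  from x show "card b = 3" unfolding blkf_def II_def using blk_card by (cases x) auto
next
  fix p assume p: "p \<in> PP m"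
  have "{b \<in> BB m. p \<in> b} = blkf m ` {x \<in> II m. p \<in> blkf m x}" unfolding BB_def by auto
  also have "card \<dots> = card {x \<in> II m. p \<in> blkf m x}"
    by (rule card_image) (rule inj_on_subset[OF blkf_inj[OF m]], auto)
  also have "\<dots> = 3" unfolding idxset using PS_card[OF m] p pdiv unfolding PP_def by simp
  finally show "card {b \<in> BB m. p \<in> b} = 3" .
next
  fix p q assume p: "p \<in> PP m" and q: "q \<in> PP m" and pq: "p \<noteq> q"
  let ?S = "{x \<in> II m. p \<in> blkf m x \<and> q \<in> blkf m x}"
  have "{b \<in> BB m. p \<in> b \<and> q \<in> b} = blkf m ` ?S" unfolding BB_def by auto
  also have "card \<dots> \<le> card ?S" by (rule card_image_le) (rule finite_subset[OF _ finII], auto)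
  also have "card ?S \<le> 1"
  proof -
    have "finite ?S" by (rule finite_subset[OF _ finII]) auto
    moreover have "\<forall>x\<in>?S. \<forall>y\<in>?S. x = y" using F3idx[OF m pq] by auto
    ultimately show ?thesis using card_le_Suc0_iff_eq[of ?S] by simp
  qed
  finally show "card {b \<in> BB m. p \<in> b \<and> q \<in> b} \<le> 1" .
qed


lemma in_BB: "j < m \<Longrightarrow> t < 7 \<Longrightarrow> blk m j t \<in> BB m"
  unfolding BB_def II_def blkf_def by (rule image_eqI[of _ _ "(j,t)"]) auto

lemma in_int: "r < 7 \<Longrightarrow> t < 6 \<Longrightarrow> r \<in> fano t \<Longrightarrow> 7*j + r \<in> blk m j t"
  using mem_blk[of r j m j t] unfolding inc_def by simp

lemma conn: assumes m: "m \<ge> 2" shows "connected_config (PP m) (BB m)"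
  unfolding connected_config_def
proof (intro conjI notI)
  show "sym_config (PP m) (BB m)" by (rule symc[OF m])
  assume "\<exists>P1 B1 P2 B2. sym_config P1 B1 \<and> sym_config P2 B2 \<and> P1 \<noteq> {} \<and> P2 \<noteq> {} \<and>
     P1 \<inter> P2 = {} \<and> PP m = P1 \<union> P2 \<and> BB m = B1 \<union> B2"
  then obtain P1 B1 P2 B2 where h: "sym_config P1 B1" "sym_config P2 B2" "P1 \<noteq> {}" "P2 \<noteq> {}"
     "P1 \<inter> P2 = {}" "PP m = P1 \<union> P2" "BB m = B1 \<union> B2" by blast
  have side: "\<And>b x y. b \<in> BB m \<Longrightarrow> x \<in> b \<Longrightarrow> y \<in> b \<Longrightarrow> (x \<in> P1) = (y \<in> P1)"
  proof -
    fix b x y assume b: "b \<in> BB m" and xy: "x \<in> b" "y \<in> b"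
    show "(x \<in> P1) = (y \<in> P1)"
    proof (cases "b \<in> B1")
      case True
      then have "b \<subseteq> P1" using h(1) unfolding sym_config_def by blast
      with xy show ?thesis by auto
    next
      case False
      then have "b \<in> B2" using b h(7) by auto
      then have "b \<subseteq> P2" using h(2) unfolding sym_config_def by blast
      with xy h(5) show ?thesis by auto
    qed
  qed
  have gad: "\<And>j r::nat. j < m \<Longrightarrow> r < 7 \<Longrightarrow> (7*j + r \<in> P1) = (7*j \<in> P1)"
  proof -
    fix j r :: nat assume j: "j < m" and r: "r < 7"
    have L: "\<And>t u u'. t < 6 \<Longrightarrow> u \<in> fano t \<Longrightarrow> u' \<in> fano t \<Longrightarrow> (7*j + u \<in> P1) = (7*j + u' \<in> P1)"
    proof -
      fix t u u' assume a: "t < 6" "u \<in> fano t" "u' \<in> fano t"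
      have "t < 7" using a by simp
      have "7*j + u \<in> blk m j t" by (rule in_int[OF fano_lt[OF a(2)] a(1) a(2)])
      moreover have "7*j + u' \<in> blk m j t" by (rule in_int[OF fano_lt[OF a(3)] a(1) a(3)])
      ultimately show "(7*j + u \<in> P1) = (7*j + u' \<in> P1)"
        by (rule side[OF in_BB[OF j \<open>t < 7\<close>]])
    qed
    have f0: "0 \<in> fano 0" "1 \<in> fano 0" "3 \<in> fano 0" and f4: "4 \<in> fano 4" "5 \<in> fano 4" "0 \<in> fano 4"
      and f5: "5 \<in> fano 5" "6 \<in> fano 5" "1 \<in> fano 5" and f1: "1 \<in> fano 1" "2 \<in> fano 1"
      by (simp_all add: fano_def)
    have e1: "(7*j + 1 \<in> P1) = (7*j \<in> P1)" using L[OF _ f0(2) f0(1)] by simp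
    have e3: "(7*j + 3 \<in> P1) = (7*j \<in> P1)" using L[OF _ f0(3) f0(1)] by simp
    have e4: "(7*j + 4 \<in> P1) = (7*j \<in> P1)" using L[OF _ f4(1) f4(3)] by simp
    have e5: "(7*j + 5 \<in> P1) = (7*j \<in> P1)" using L[OF _ f4(2) f4(3)] by simp
    have e6: "(7*j + 6 \<in> P1) = (7*j \<in> P1)" using L[OF _ f5(2) f5(1)] e5 by simp
    have e2: "(7*j + 2 \<in> P1) = (7*j \<in> P1)" using L[OF _ f1(2) f1(1)] e1 by simp
    from lt7[OF r] e1 e2 e3 e4 e5 e6 show "(7*j + r \<in> P1) = (7*j \<in> P1)" by auto
  qed
  have step: "\<And>j. j + 1 < m \<Longrightarrow> (7*(j+1) \<in> P1) = (7*j \<in> P1)"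
  proof -
    fix j assume j: "j + 1 < m"
    have b: "blk m j 6 \<in> BB m" using in_BB[of j m 6] j by simp
    have "7*j \<in> blk m j 6" unfolding blk_def by simp
    moreover have "7*(j+1)+2 \<in> blk m j 6" unfolding blk_def using j by simp
    ultimately have "(7*(j+1)+2 \<in> P1) = (7*j \<in> P1)" using side[OF b] by blast
    with gad[of "j+1" 2] j show "(7*(j+1) \<in> P1) = (7*j \<in> P1)" by simp
  qed
  have all: "\<And>j. j < m \<Longrightarrow> (7*j \<in> P1) = (0 \<in> P1)"
  proof -
    fix j show "j < m \<Longrightarrow> (7*j \<in> P1) = (0 \<in> P1)"
    proof (induction j)
      case 0 then show ?case by simp
    next
      case (Suc j) then show ?case using step[of j] by simp
    qed
  qed
  have allp: "\<And>p. p \<in> PP m \<Longrightarrow> (p \<in> P1) = (0 \<in> P1)"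
  proof -
    fix p assume "p \<in> PP m"
    then have "p div 7 < m" "p mod 7 < 7" unfolding PP_def by auto
    with gad[of "p div 7" "p mod 7"] all[of "p div 7"] show "(p \<in> P1) = (0 \<in> P1)" by simp
  qed
  show False
  proof (cases "0 \<in> P1")
    case True
    then have "PP m \<subseteq> P1" using allp by auto
    with h(4,5,6) show False by auto
  next
    case False
    then have "P1 \<inter> PP m = {}" using allp by auto
    with h(3,6) show False by auto
  qed
qed


lemma avoid0: assumes "x < 7" "y < 7" shows "\<exists>t\<in>{0,1,2,3,4,5::nat}. x \<notin> fano t \<and> y \<notin> fano t"
  using lt7[OF assms(1)] lt7[OF assms(2)] by (elim disjE) (simp_all add: fano_def)

lemma avoid: "\<exists>t<6. x \<notin> fano t \<and> y \<notin> fano t"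
proof -
  define x' where "x' = (if x < 7 then x else 0)"
  define y' where "y' = (if y < 7 then y else 0)"
  have "x' < 7" "y' < 7" unfolding x'_def y'_def by auto
  from avoid0[OF this] obtain t where t: "t \<in> {0,1,2,3,4,5::nat}" "x' \<notin> fano t" "y' \<notin> fano t" by blast
  have "x \<notin> fano t" using t(2) fano_lt[of x t] unfolding x'_def by (auto split: if_splits)
  moreover have "y \<notin> fano t" using t(3) fano_lt[of y t] unfolding y'_def by (auto split: if_splits)
  moreover have "t < 6" using t(1) by auto
  ultimately show ?thesis by blast
qed

lemma card_le2: assumes "finite S" "card S \<le> 2" shows "\<exists>x y. S \<subseteq> {x,y}"
proof -
  have "card S = 0 \<or> card S = 1 \<or> card S = 2" using assms(2) by auto
  then show ?thesis
  proof (elim disjE)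
    assume "card S = 0" then have "S = {}" using assms(1) by simp
    then show ?thesis by blast
  next
    assume "card S = 1" then have "\<exists>x. S = {x}" using card_1_singleton_iff[of S] by simp
    then show ?thesis by blast
  next
    assume "card S = 2" then have "\<exists>x y. S = {x,y}" using card_2_iff[of S] by auto
    then show ?thesis by blast
  qed
qed

lemma local3: assumes h: "\<forall>t<6. \<exists>r\<in>fano t. f r" shows "3 \<le> card {r. r < (7::nat) \<and> f r}"
proof (rule ccontr)
  let ?S = "{r. r < (7::nat) \<and> f r}"
  assume a: "\<not> 3 \<le> card ?S"
  have fin: "finite ?S" by (rule finite_subset[of _ "{..<7}"]) auto
  have c2: "card ?S \<le> 2" using a by simp
  obtain x y where xy: "?S \<subseteq> {x,y}" using card_le2[OF fin c2] by blast
  obtain t where t: "t < 6" "x \<notin> fano t" "y \<notin> fano t" using avoid by blast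
  from h t(1) obtain r where r: "r \<in> fano t" "f r" by blast
  have "r < 7" by (rule fano_lt[OF r(1)])
  with r(2) have "r \<in> ?S" by simp
  with xy have "r = x \<or> r = y" by blast
  with t r(1) show False by blast
qed

lemma cardfib: assumes "Q \<subseteq> PP m" shows "card Q = (\<Sum>j<m. card {r. r < 7 \<and> 7*j+r \<in> Q})"
proof -
  let ?A = "SIGMA j:{..<m}. {r. r < 7 \<and> 7*j+r \<in> Q}"
  have Qeq: "Q = (\<lambda>(j,r). 7*j+r) ` ?A"
  proof
    show "Q \<subseteq> (\<lambda>(j,r). 7*j+r) ` ?A"
    proof
      fix p assume p: "p \<in> Q"
      then have "p < 7*m" using assms unfolding PP_def by auto
      then have "(p div 7, p mod 7) \<in> ?A" using p by simp
      then show "p \<in> (\<lambda>(j,r). 7*j+r) ` ?A" by (rule image_eqI[rotated]) simp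
    qed
  qed auto
  have inj: "inj_on (\<lambda>(j,r). 7*j+r) ?A"
  proof (rule inj_onI)
    fix x y assume hx: "x \<in> ?A" "y \<in> ?A" "(\<lambda>(j,r). 7*j+r) x = (\<lambda>(j::nat,r::nat). 7*j+r) y"
    obtain a r where x: "x = (a,r)" by (cases x)
    obtain b s where y: "y = (b,s)" by (cases y)
    from hx x y have "r < 7" "s < 7" "7*a+r = 7*b+s" by auto
    then show "x = y" using eq7[of r s a b] x y by simp
  qed
  have "card Q = card ((\<lambda>(j,r). 7*j+r) ` ?A)" using Qeq by simp
  also have "\<dots> = card ?A" by (rule card_image[OF inj])
  also have "\<dots> = (\<Sum>j<m. card {r. r < 7 \<and> 7*j+r \<in> Q})"
  proof (rule card_SigmaI)
    show "finite {..<m}" by simp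
    show "\<forall>a\<in>{..<m}. finite {r. r < 7 \<and> 7*a+r \<in> Q}"
    proof
      fix a show "finite {r. r < 7 \<and> 7*a+r \<in> Q}" by (rule finite_subset[of _ "{..<7}"]) auto
    qed
  qed
  finally show ?thesis .
qed

lemma lower: assumes "blocking_set (PP m) (BB m) Q" shows "3*m \<le> card Q"
proof -
  have sub: "Q \<subseteq> PP m" using assms unfolding blocking_set_def by auto
  have "\<And>j. j < m \<Longrightarrow> 3 \<le> card {r. r < 7 \<and> 7*j+r \<in> Q}"
  proof -
    fix j assume j: "j < m"
    show "3 \<le> card {r. r < 7 \<and> 7*j+r \<in> Q}"
    proof (rule local3, intro allI impI)
      fix t :: nat assume t: "t < 6"
      then have "blk m j t \<in> BB m" using in_BB[OF j, of t] by simp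
      then have "blk m j t \<inter> Q \<noteq> {}" using assms unfolding blocking_set_def by auto
      then obtain x where "x \<in> blk m j t" "x \<in> Q" by auto
      with t obtain s where "s \<in> fano t" "7*j+s \<in> Q" unfolding blk_def by auto
      then show "\<exists>r\<in>fano t. 7*j+r \<in> Q" by blast
    qed
  qed
  then have "(\<Sum>j<m. (3::nat)) \<le> (\<Sum>j<m. card {r. r < 7 \<and> 7*j+r \<in> Q})" by (rule sum_mono) simp
  with cardfib[OF sub] show ?thesis by simp
qed

definition Q0 :: "nat \<Rightarrow> nat set" where
  "Q0 m = {p \<in> PP m. if even (p div 7) then p mod 7 \<in> {0,2,6} else p mod 7 \<in> {1,3,4}}"

lemma memQ0: assumes "j < m" "s < 7" shows "(7*j+s \<in> Q0 m) = (if even j then s \<in> {0,2,6} else s \<in> {1,3,4})"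
proof -
  have "7*j+s < 7*m" using assms by linarith
  moreover have "(7*j+s) div 7 = j" "(7*j+s) mod 7 = s" using assms by auto
  ultimately show ?thesis unfolding Q0_def PP_def by simp
qed

lemma fano_mix: assumes "t < 6" shows "(\<exists>s\<in>fano t. s \<in> {0,2,6}) \<and> (\<exists>s\<in>fano t. s \<notin> {0,2,6}) \<and>
   (\<exists>s\<in>fano t. s \<in> {1,3,4}) \<and> (\<exists>s\<in>fano t. s \<notin> {1,3,4})"
  using lt6[OF assms] by (elim disjE) (simp_all add: fano_def)

lemma parity: fixes j m :: nat assumes "j < m" "m \<ge> 2"
  shows "even j \<noteq> even ((j+1) mod m) \<or> even ((j+1) mod m) \<noteq> even ((j+2) mod m)"
proof (cases "j + 1 < m")
  case True then show ?thesis by simp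
next
  case False
  then have "j + 1 = m" using assms by simp
  then have "(j+1) mod m = 0" "(j+2) mod m = 1" using assms modc[of j m 2] by auto
  then show ?thesis by simp
qed

lemma Q0_card: "card (Q0 m) = 3*m"
proof -
  have "Q0 m \<subseteq> PP m" unfolding Q0_def by auto
  from cardfib[OF this] have "card (Q0 m) = (\<Sum>j<m. card {r. r < 7 \<and> 7*j+r \<in> Q0 m})" .
  also have "\<dots> = (\<Sum>j<m. 3)"
  proof (rule sum.cong[OF refl])
    fix j assume "j \<in> {..<m}"
    then have j: "j < m" by simp
    show "card {r. r < 7 \<and> 7*j+r \<in> Q0 m} = 3"
    proof (cases "even j")
      case True
      have "{r. r < 7 \<and> 7*j+r \<in> Q0 m} = {0,2,6}"
      proof (rule set_eqI, rule iffI)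
        fix r assume "r \<in> {r. r < 7 \<and> 7*j+r \<in> Q0 m}"
        then show "r \<in> {0,2,6}" using memQ0[OF j, of r] True by simp
      next
        fix r :: nat assume r: "r \<in> {0,2,6}"
        then have "r < 7" by auto
        then show "r \<in> {r. r < 7 \<and> 7*j+r \<in> Q0 m}" using memQ0[OF j, of r] True r by simp
      qed
      then show ?thesis by simp
    next
      case False
      have "{r. r < 7 \<and> 7*j+r \<in> Q0 m} = {1,3,4}"
      proof (rule set_eqI, rule iffI)
        fix r assume "r \<in> {r. r < 7 \<and> 7*j+r \<in> Q0 m}"
        then show "r \<in> {1,3,4}" using memQ0[OF j, of r] False by simp
      next
        fix r :: nat assume r: "r \<in> {1,3,4}"
        then have "r < 7" by auto
        then show "r \<in> {r. r < 7 \<and> 7*j+r \<in> Q0 m}" using memQ0[OF j, of r] False r by simp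
      qed
      then show ?thesis by simp
    qed
  qed
  finally show ?thesis by simp
qed

lemma Q0_block: assumes m: "m \<ge> 2" shows "blocking_set (PP m) (BB m) (Q0 m)"
  unfolding blocking_set_def
proof (intro conjI ballI)
  show "Q0 m \<subseteq> PP m" unfolding Q0_def by auto
  fix b assume "b \<in> BB m"
  then obtain j t where jt: "j < m" "t < 7" "b = blk m j t" unfolding BB_def II_def blkf_def by auto
  have "b \<inter> Q0 m \<noteq> {} \<and> b - Q0 m \<noteq> {}"
  proof (cases "t < 6")
    case True
    from fano_mix[OF True] obtain s1 s2 s3 s4 where
      s: "s1 \<in> fano t" "s1 \<in> {0,2,6}" "s2 \<in> fano t" "s2 \<notin> {0,2,6}"
         "s3 \<in> fano t" "s3 \<in> {1,3,4}" "s4 \<in> fano t" "s4 \<notin> {1,3,4}" by blast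
    have mem: "\<And>s. s \<in> fano t \<Longrightarrow> 7*j+s \<in> b" using jt in_int[OF fano_lt _ , of _ t] True by blast
    show ?thesis
    proof (cases "even j")
      case True
      have "7*j+s1 \<in> Q0 m" "7*j+s2 \<notin> Q0 m" using memQ0[OF jt(1)] fano_lt s True by auto
      with mem s show ?thesis by blast
    next
      case False
      have "7*j+s3 \<in> Q0 m" "7*j+s4 \<notin> Q0 m" using memQ0[OF jt(1)] fano_lt s False by auto
      with mem s show ?thesis by blast
    qed
  next
    case False
    let ?j1 = "(j+1) mod m" and ?j2 = "(j+2) mod m"
    have jm: "?j1 < m" "?j2 < m" using jt by auto
    have inb: "7*j+0 \<in> b" "7*?j1+2 \<in> b" "7*?j2+6 \<in> b" using False jt unfolding blk_def by auto
    have q: "(7*j+0 \<in> Q0 m) = even j" "(7*?j1+2 \<in> Q0 m) = even ?j1" "(7*?j2+6 \<in> Q0 m) = even ?j2"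
      using memQ0[OF jt(1), of 0] memQ0[OF jm(1), of 2] memQ0[OF jm(2), of 6] by auto
    from parity[OF jt(1) m] show ?thesis
    proof
      assume "even j \<noteq> even ?j1"
      with inb(1,2) q(1,2) show ?thesis by (cases "even j") blast+
    next
      assume "even ?j1 \<noteq> even ?j2"
      with inb(2,3) q(2,3) show ?thesis by (cases "even ?j1") blast+
    qed
  qed
  then show "b \<inter> Q0 m \<noteq> {}" "b - Q0 m \<noteq> {}" by auto
qed

lemma minb: assumes "m \<ge> 2" shows "min_blocking_card (PP m) (BB m) (3*m)"
  unfolding min_blocking_card_def using Q0_block[OF assms] Q0_card lower by blast


lemma card_PP: "card (PP m) = 7*m" unfolding PP_def by simp

lemma partA: assumes "k \<ge> (1::nat)" shows "\<exists>(P :: nat set) B m. connected_config P B \<and> min_blocking_card P B m \<and>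
            int m = \<lceil>real (card P) / 3\<rceil> + int k"
proof -
  obtain t where "k = 2*t \<or> k = 2*t+1" by (metis oddE evenE)
  then show ?thesis
  proof
    assume k: "k = 2*t"
    then have t: "t \<ge> 1" using assms by simp
    let ?m = "3*t"
    have m: "?m \<ge> 2" using t by simp
    have "\<lceil>real (card (PP ?m)) / 3\<rceil> = int (7*t)" unfolding card_PP
      by (simp add: ceiling_eq_iff)
    then have "int (3 * ?m) = \<lceil>real (card (PP ?m)) / 3\<rceil> + int k" using k by simp
    then show ?thesis using conn[OF m] minb[OF m] by blast
  next
    assume k: "k = 2*t+1"
    let ?m = "3*t+2"
    have m: "?m \<ge> 2" by simp
    have "real (card (PP ?m)) / 3 = real (7*t+4) + 2/3" unfolding card_PP by (simp add: field_simps)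
    then have "\<lceil>real (card (PP ?m)) / 3\<rceil> = int (7*t+5)"
      by (simp add: ceiling_eq_iff)
    then have "int (3 * ?m) = \<lceil>real (card (PP ?m)) / 3\<rceil> + int k" using k by simp
    then show ?thesis using conn[OF m] minb[OF m] by blast
  qed
qed

lemma partB: assumes "k \<ge> (1::nat)" shows "\<exists>(P :: nat set) B m. connected_config P B \<and> min_blocking_card P B m \<and>
            int m = \<lfloor>real (card P) / 2\<rfloor> - int k"
proof -
  let ?m = "2*k"
  have m: "?m \<ge> 2" using assms by simp
  have e: "real (card (PP ?m)) / 2 = real (7*k)" unfolding card_PP by simp
  have "\<lfloor>real (card (PP ?m)) / 2\<rfloor> = int (7*k)" unfolding e by (rule floor_of_nat)
  then have "int (3 * ?m) = \<lfloor>real (card (PP ?m)) / 2\<rfloor> - int k" by simp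
  then show ?thesis using conn[OF m] minb[OF m] by blast
qed

theorem mainTheorem6:
  fixes k :: nat
  assumes "k \<ge> 1"
  shows "(\<exists>(P :: nat set) B m. connected_config P B \<and> min_blocking_card P B m \<and>
            int m = \<lceil>real (card P) / 3\<rceil> + int k)
       \<and> (\<exists>(P :: nat set) B m. connected_config P B \<and> min_blocking_card P B m \<and>
            int m = \<lfloor>real (card P) / 2\<rfloor> - int k)"
  using partA[OF assms] partB[OF assms] by blast

end
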